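(* Let $H$ be a Hilbert space and $U_{ik}\in B(H)$, $i,k=1,\dots,n$, operators satisfying relations (R1)–(R5). Then each $U_{ik}$ and each $U_{ik}^*$ is a partial isometry.
   Context: $n\ge2$, $\theta\in M_n(\mathbb R)$ skew-symmetric, $\omega_{ij}=e^{2\pi i\theta_{ij}}$. Relations, for all $i,j,k,l\in\{1,\dots,n\}$: (R1) $U_{ik}U_{jl}+\omega_{ji}U_{jk}U_{il}=\omega_{kl}U_{il}U_{jk}+\omega_{ji}\omega_{kl}U_{jl}U_{ik}$; (R2) $\sum_iU_{ik}U_{il}^*=\delta_{kl}1$; (R3) $\sum_iU_{il}^*U_{ik}=\delta_{kl}1$; (R4) $U_{jk}U_{ik}^*=0$ for $i\neq j$; (R5) $U_{ik}^*U_{jk}=0$ for $i\neq j$. *)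

theory Defs
  imports Complex_Main
begin

text \<open>HOL-Analysis only provides real inner product spaces.\<close>

class complex_inner = ab_group_add +
  fixes scaleC :: "complex \<Rightarrow> 'a \<Rightarrow> 'a"
    and cinner :: "'a \<Rightarrow> 'a \<Rightarrow> complex"
  assumes scaleC_add_right: "scaleC a (x + y) = scaleC a x + scaleC a y"
    and scaleC_add_left: "scaleC (a + b) x = scaleC a x + scaleC b x"
    and scaleC_scaleC: "scaleC a (scaleC b x) = scaleC (a * b) x"
    and scaleC_one: "scaleC 1 x = x"
    and cinner_add_right: "cinner x (y + z) = cinner x y + cinner x z"
    and cinner_scaleC_right: "cinner x (scaleC a y) = a * cinner x y"
    and cinner_commute: "cinner y x = cnj (cinner x y)"
    and cinner_nonneg: "Re (cinner x x) \<ge> 0"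
    and cinner_eq_zero_iff: "cinner x x = 0 \<longleftrightarrow> x = 0"

class chilbert = complex_inner +
  assumes cinner_complete: "\<And>X :: nat \<Rightarrow> 'a.
    (\<forall>e>0. \<exists>N. \<forall>m\<ge>N. \<forall>k\<ge>N. sqrt (Re (cinner (X m - X k) (X m - X k))) < e)
      \<Longrightarrow> (\<exists>L. \<forall>e>0. \<exists>N. \<forall>k\<ge>N. sqrt (Re (cinner (X k - L) (X k - L))) < e)"

definition cnorm :: "'a::complex_inner \<Rightarrow> real" where
  "cnorm x = sqrt (Re (cinner x x))"

definition bounded_op :: "('a::complex_inner \<Rightarrow> 'a) \<Rightarrow> bool" where
  "bounded_op A \<longleftrightarrow> (\<forall>x y. A (x + y) = A x + A y) \<and> (\<forall>c x. A (scaleC c x) = scaleC c (A x))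
     \<and> (\<exists>K. \<forall>x. cnorm (A x) \<le> K * cnorm x)"

definition adj :: "('a::complex_inner \<Rightarrow> 'a) \<Rightarrow> ('a \<Rightarrow> 'a)" where
  "adj A = (THE B. \<forall>x y. cinner (A x) y = cinner x (B y))"

definition is_projection :: "('a::complex_inner \<Rightarrow> 'a) \<Rightarrow> bool" where
  "is_projection P \<longleftrightarrow> bounded_op P \<and> P \<circ> P = P \<and> adj P = P"

definition partial_isometry :: "('a::complex_inner \<Rightarrow> 'a) \<Rightarrow> bool" where
  "partial_isometry V \<longleftrightarrow> bounded_op V \<and> is_projection (adj V \<circ> V)"

definition omega :: "(nat \<Rightarrow> nat \<Rightarrow> real) \<Rightarrow> nat \<Rightarrow> nat \<Rightarrow> complex" where
  "omega \<theta> i j = exp (2 * complex_of_real pi * \<i> * complex_of_real (\<theta> i j))"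

end

theory Submission
  imports Defs
begin


lemma scaleC_zero_right[simp]: "scaleC a 0 = 0"
  using scaleC_add_right[of a 0 0] by simp
lemma scaleC_zero_left[simp]: "scaleC 0 x = 0"
  using scaleC_add_left[of 0 0 x] by simp
lemma scaleC_minus_right: "scaleC a (- x) = - scaleC a x"
proof -
  have "scaleC a x + scaleC a (- x) = 0" using scaleC_add_right[of a x "- x"] by simp
  thus ?thesis by (simp add: add_eq_0_iff)
qed
lemma scaleC_diff_right: "scaleC a (x - y) = scaleC a x - scaleC a y"
proof -
  have h: "scaleC a x = scaleC a (x - y) + scaleC a y" using scaleC_add_right[of a "x - y" y] by simp
  show ?thesis by (subst h) simp
qed
lemma scaleC_diff_left: "scaleC (a - b) x = scaleC a x - scaleC b x"
proof -
  have h: "scaleC a x = scaleC (a - b) x + scaleC b x" using scaleC_add_left[of "a - b" b x] by simp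
  show ?thesis by (subst h) simp
qed
lemma cinner_zero_right[simp]: "cinner x 0 = 0"
proof -
  have "cinner x (0+0) = cinner x 0 + cinner x 0" by (rule cinner_add_right)
  thus ?thesis by simp
qed
lemma cinner_zero_left[simp]: "cinner 0 x = 0"
  using cinner_commute[of 0 x] by simp
lemma cinner_diff_right: "cinner x (y - z) = cinner x y - cinner x z"
proof -
  have h: "cinner x y = cinner x (y - z) + cinner x z" using cinner_add_right[of x "y - z" z] by simp
  show ?thesis by (subst h) simp
qed
lemma cinner_add_left: "cinner (x + y) z = cinner x z + cinner y z"
  using cinner_add_right[of z x y] cinner_commute[of "x+y" z] cinner_commute[of x z] cinner_commute[of y z]
  by simp
lemma cinner_diff_left: "cinner (x - y) z = cinner x z - cinner y z"
proof -
  have h: "cinner x z = cinner (x - y) z + cinner y z" using cinner_add_left[of "x - y" y z] by simp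
  show ?thesis by (subst h) simp
qed
lemma cinner_scaleC_left: "cinner (scaleC a x) y = cnj a * cinner x y"
  using cinner_commute[of "scaleC a x" y] cinner_commute[of y x] by (simp add: cinner_scaleC_right)
lemma cinner_self_real: "complex_of_real (Re (cinner x x)) = cinner x x"
proof -
  have e: "cinner x x = cnj (cinner x x)" by (rule cinner_commute)
  have "Im (cinner x x) = 0" using arg_cong[OF e, of Im] by simp
  thus ?thesis by (simp add: complex_eq_iff)
qed
lemma cinner_ext: "(\<And>x. cinner x u = cinner x v) \<Longrightarrow> u = v"
proof -
  assume H: "\<And>x. cinner x u = cinner x v"
  have "cinner (u - v) (u - v) = 0" using H[of "u - v"] by (simp add: cinner_diff_right)
  thus "u = v" by (simp add: cinner_eq_zero_iff)
qed

lemma cnorm_nonneg: "cnorm x \<ge> 0" by (simp add: cnorm_def cinner_nonneg)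
lemma cnorm_sq: "cnorm x ^ 2 = Re (cinner x x)" by (simp add: cnorm_def cinner_nonneg)

lemma expand: "cinner (x - scaleC t y) (x - scaleC t y) =
   cinner x x - t * cinner x y - cnj t * cinner y x + cnj t * t * cinner y y"
  by (simp add: cinner_diff_left cinner_diff_right cinner_scaleC_left cinner_scaleC_right algebra_simps)

lemma cs_sq: "cmod (cinner x y) ^ 2 \<le> Re (cinner x x) * Re (cinner y y)"
proof (cases "y = 0")
  case True thus ?thesis by simp
next
  case False
  define r where "r = Re (cinner y y)"
  have r: "cinner y y = complex_of_real r" unfolding r_def by (rule cinner_self_real[symmetric])
  have "cinner y y \<noteq> 0" using False cinner_eq_zero_iff[of y] by blast
  hence "r \<noteq> 0" using r by simp
  moreover have "r \<ge> 0" unfolding r_def by (rule cinner_nonneg)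
  ultimately have rpos: "r > 0" by simp
  define a where "a = cinner y x"
  have xy: "cinner x y = cnj a" unfolding a_def by (rule cinner_commute)
  define t where "t = a / r"
  have "0 \<le> Re (cinner (x - scaleC t y) (x - scaleC t y))" by (rule cinner_nonneg)
  also have "\<dots> = Re (cinner x x) - cmod a ^ 2 / r"
    unfolding expand xy r t_def a_def[symmetric]
    using rpos cmod_power2[of a] by (simp add: field_simps power2_eq_square)
  finally have "cmod a ^ 2 \<le> Re (cinner x x) * r" using rpos by (simp add: field_simps)
  moreover have "cmod (cinner x y) = cmod a" by (simp add: xy)
  ultimately show ?thesis by (simp add: r_def)
qed

lemma cs: "cmod (cinner x y) \<le> cnorm x * cnorm y"
proof -
  have "cmod (cinner x y) ^ 2 \<le> (cnorm x * cnorm y) ^ 2"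
    using cs_sq[of x y] by (simp add: power_mult_distrib cnorm_sq)
  thus ?thesis by (rule power2_le_imp_le) (simp add: cnorm_nonneg)
qed

lemma nsq_add: "Re (cinner (x + y) (x + y)) = Re (cinner x x) + Re (cinner y y) + 2 * Re (cinner x y)"
proof -
  have "cinner y x = cnj (cinner x y)" by (rule cinner_commute)
  thus ?thesis by (simp add: cinner_add_left cinner_add_right)
qed

lemma triangle: "cnorm (x + y) \<le> cnorm x + cnorm y"
proof -
  have "Re (cinner x y) \<le> cnorm x * cnorm y" using cs[of x y] abs_Re_le_cmod[of "cinner x y"] by linarith
  moreover have "cnorm (x + y) ^ 2 = cnorm x ^ 2 + cnorm y ^ 2 + 2 * Re (cinner x y)"
    by (simp add: cnorm_sq nsq_add)
  ultimately have "cnorm (x + y) ^ 2 \<le> (cnorm x + cnorm y) ^ 2"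
    by (simp add: power2_sum)
  thus ?thesis by (rule power2_le_imp_le) (simp add: cnorm_nonneg)
qed

lemma parallelogram: "Re (cinner (x - y) (x - y)) + Re (cinner (x + y) (x + y)) = 2 * Re (cinner x x) + 2 * Re (cinner y y)"
  by (simp add: cinner_add_left cinner_add_right cinner_diff_left cinner_diff_right)

lemma nsq_scale: "Re (cinner (scaleC c x) (scaleC c x)) = cmod c ^ 2 * Re (cinner x x)"
proof -
  have "cinner (scaleC c x) (scaleC c x) = (cnj c * c) * cinner x x"
    by (simp add: cinner_scaleC_left cinner_scaleC_right)
  also have "cnj c * c = complex_of_real (cmod c ^ 2)" by (subst complex_norm_square) (rule mult.commute)
  also have "cinner x x = complex_of_real (Re (cinner x x))" by (rule cinner_self_real[symmetric])
  finally have "cinner (scaleC c x) (scaleC c x) = complex_of_real (cmod c ^ 2 * Re (cinner x x))"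
    by (simp only: of_real_mult)
  thus ?thesis by (simp only: Re_complex_of_real)
qed
lemma nsq_commute_diff: "Re (cinner (x - y) (x - y)) = Re (cinner (y - x) (y - x))"
  by (simp add: cinner_diff_left cinner_diff_right)
lemma cnorm_commute_diff: "cnorm (x - y) = cnorm (y - x)"
  unfolding cnorm_def using nsq_commute_diff[of x y] by simp

lemma riesz:
  fixes f :: "'a::chilbert \<Rightarrow> complex"
  assumes add: "\<forall>x y. f (x+y) = f x + f y" and hom: "\<forall>c x. f (scaleC c x) = c * f x"
    and bd: "\<forall>x. cmod (f x) \<le> K * cnorm x"
  shows "\<exists>z. \<forall>x. f x = cinner z x"
proof (cases "\<forall>x. f x = 0")
  case True thus ?thesis by (intro exI[of _ 0]) simp
next
  case False
  have f0: "f 0 = 0" using add using add[rule_format, of 0 0] by simp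
  have fdiff: "f (x - y) = f x - f y" for x y using add[rule_format, of "x-y" y] by simp
  then obtain x0 where x0: "f x0 \<noteq> 0" using False by blast
  define y0 where "y0 = scaleC (1 / f x0) x0"
  have fy0: "f y0 = 1" using x0 hom by (simp add: y0_def)
  define nsq :: "'a \<Rightarrow> real" where "nsq y = Re (cinner y y)" for y
  define S where "S = nsq ` {y. f y = 1}"
  define d where "d = Inf S"
  have Sne: "S \<noteq> {}" using fy0 S_def by blast
  have Sbdd: "bdd_below S" unfolding S_def nsq_def bdd_below_def using cinner_nonneg by blast
  have dle: "f y = 1 \<Longrightarrow> d \<le> nsq y" for y
    unfolding d_def S_def using Sbdd S_def by (auto intro!: cInf_lower)
  have "\<forall>k::nat. \<exists>y. f y = 1 \<and> nsq y < d + 1 / (real k + 1)"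
  proof
    fix k :: nat
    have "Inf S < d + 1 / (real k + 1)" unfolding d_def by (simp add: add_pos_pos)
    from cInf_lessD[OF Sne this] show "\<exists>y. f y = 1 \<and> nsq y < d + 1 / (real k + 1)"
      unfolding S_def by blast
  qed
  then obtain Y where Y1: "\<And>k. f (Y k) = 1" and Y2: "\<And>k. nsq (Y k) < d + 1 / (real k + 1)"
    by metis
  have cauchy_bound: "nsq (Y m - Y k) \<le> 2 / (real m + 1) + 2 / (real k + 1)" for m k
  proof -
    define w where "w = scaleC (1/2) (Y m + Y k)"
    have "f w = 1" using Y1 add hom by (simp add: w_def)
    hence "d \<le> nsq w" by (rule dle)
    also have "nsq w = nsq (Y m + Y k) / 4" unfolding w_def nsq_def nsq_scale
      by (simp add: power2_eq_square)
    finally have "4 * d \<le> nsq (Y m + Y k)" by simp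
    moreover have "nsq (Y m - Y k) + nsq (Y m + Y k) = 2 * nsq (Y m) + 2 * nsq (Y k)"
      unfolding nsq_def by (rule parallelogram)
    ultimately show ?thesis using Y2[of m] Y2[of k] by linarith
  qed
  have "\<forall>e>0. \<exists>N. \<forall>m\<ge>N. \<forall>k\<ge>N. sqrt (Re (cinner (Y m - Y k) (Y m - Y k))) < e"
  proof (intro allI impI)
    fix e :: real assume e: "e > 0"
    obtain N :: nat where N: "4 / e^2 < real N" using reals_Archimedean2 by blast
    have e2: "e^2 > 0" using e by simp
    have a: "4 < real N * e^2" using N e2 by (simp add: field_simps)
    have b: "4 < (real N + 1) * e^2" unfolding distrib_right using a e2 by linarith
    have "4 / (real N + 1) < e^2" using pos_divide_less_eq[of "real N + 1" 4 "e^2"] b by (simp add: mult.commute)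
    show "\<exists>N. \<forall>m\<ge>N. \<forall>k\<ge>N. sqrt (Re (cinner (Y m - Y k) (Y m - Y k))) < e"
    proof (intro exI allI impI)
      fix m k assume m: "N \<le> m" and k: "N \<le> k"
      have "2 / (real m + 1) \<le> 2 / (real N + 1)" using m by (intro divide_left_mono) auto
      moreover have "2 / (real k + 1) \<le> 2 / (real N + 1)" using k by (intro divide_left_mono) auto
      ultimately have "nsq (Y m - Y k) < e^2"
        using cauchy_bound[of m k] \<open>4 / (real N + 1) < e^2\<close> by linarith
      hence "sqrt (nsq (Y m - Y k)) < sqrt (e^2)" by (simp only: real_sqrt_less_iff)
      thus "sqrt (Re (cinner (Y m - Y k) (Y m - Y k))) < e" using e by (simp add: nsq_def)
    qed
  qed
  from cinner_complete[OF this] obtain z where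
    z: "\<And>e. e > 0 \<Longrightarrow> \<exists>N. \<forall>k\<ge>N. cnorm (Y k - z) < e" unfolding cnorm_def by blast
  define M where "M = max K 0"
  have fz: "f z = 1"
  proof (rule ccontr)
    assume "f z \<noteq> 1"
    define c where "c = cmod (1 - f z)"
    have c: "c > 0" using \<open>f z \<noteq> 1\<close> c_def by simp
    obtain N where N: "\<forall>k\<ge>N. cnorm (Y k - z) < c / (M + 1)"
      using z[of "c / (M+1)"] c M_def by (auto simp: field_simps)
    have "c = cmod (f (Y N - z))" using fdiff Y1 c_def by simp
    also have "\<dots> \<le> K * cnorm (Y N - z)" using bd by blast
    also have "\<dots> \<le> M * cnorm (Y N - z)" unfolding M_def
      by (simp add: mult_right_mono cnorm_nonneg)
    also have "\<dots> \<le> M * (c / (M + 1))" using N M_def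
      by (intro mult_left_mono) (auto intro: less_imp_le)
    also have "\<dots> < c" using c M_def by (simp add: field_simps)
    finally show False by simp
  qed
  have zmin: "cnorm z \<le> cnorm y" if fy: "f y = 1" for y
  proof (rule ccontr)
    assume nt: "\<not> cnorm z \<le> cnorm y"
    define \<delta> where "\<delta> = cnorm z - cnorm y"
    have dp: "\<delta> > 0" using nt \<delta>_def by simp
    obtain N where N: "\<forall>k\<ge>N. cnorm (Y k - z) < \<delta> / 2" using z[of "\<delta>/2"] dp by auto
    obtain M' :: nat where M': "4 / \<delta>^2 < real M'" using reals_Archimedean2 by blast
    define k where "k = max N M'"
    have "cnorm z \<le> cnorm (Y k) + cnorm (z - Y k)" using triangle[of "Y k" "z - Y k"] by simp
    moreover have "cnorm (z - Y k) < \<delta> / 2" using N k_def cnorm_commute_diff by (metis max.cobounded1)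
    ultimately have gt: "cnorm (Y k) > cnorm y + \<delta>/2" using \<delta>_def by linarith
    have "(cnorm y + \<delta>/2)^2 < cnorm (Y k) ^ 2"
      using gt cnorm_nonneg[of y] dp by (intro power_strict_mono) auto
    moreover have "(cnorm y + \<delta>/2)^2 \<ge> cnorm y ^ 2 + \<delta>^2/4"
      using cnorm_nonneg[of y] dp by (simp add: power2_sum power_divide)
    ultimately have "nsq (Y k) > nsq y + \<delta>^2/4" unfolding nsq_def cnorm_sq by linarith
    moreover have "d \<le> nsq y" using dle fy .
    moreover have "1 / (real k + 1) < \<delta>^2/4"
    proof -
      have "4 / \<delta>^2 < real k + 1" using M' k_def by linarith
      thus ?thesis using dp by (simp add: field_simps)
    qed
    ultimately show False using Y2[of k] by linarith
  qed
  have orth: "cinner w z = 0" if fw: "f w = 0" for w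
  proof -
    define c where "c = cinner w z"
    define s :: real where "s = 1 / (nsq w + 1)"
    have nw: "nsq w \<ge> 0" unfolding nsq_def by (rule cinner_nonneg)
    have sp: "s > 0" using nw s_def by simp
    have "s + s * nsq w = 1" using nw s_def by (simp add: field_simps)
    hence sw: "s * nsq w < 1" using sp by linarith
    define t where "t = complex_of_real s * c"
    have "f (z - scaleC t w) = 1" using fdiff hom fz fw by simp
    hence "cnorm z \<le> cnorm (z - scaleC t w)" by (rule zmin)
    hence "nsq z \<le> nsq (z - scaleC t w)" unfolding nsq_def cnorm_def by simp
    also have "nsq (z - scaleC t w) = nsq z - 2 * s * (cmod c)^2 + s^2 * (cmod c)^2 * nsq w"
    proof -
      have czw: "cinner z w = cnj c" unfolding c_def by (rule cinner_commute)
      have ww: "cinner w w = complex_of_real (nsq w)" unfolding nsq_def by (rule cinner_self_real[symmetric])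
      have cc: "c * cnj c = complex_of_real ((cmod c)^2)" by (rule complex_norm_square[symmetric])
      have "cinner (z - scaleC t w) (z - scaleC t w) = cinner z z - 2 * complex_of_real s * (c * cnj c)
         + complex_of_real s ^ 2 * (c * cnj c) * complex_of_real (nsq w)"
        unfolding expand czw ww t_def c_def[symmetric]
        by (simp add: algebra_simps power2_eq_square)
      also have "\<dots> = cinner z z - complex_of_real (2 * s * (cmod c)^2)
         + complex_of_real (s^2 * (cmod c)^2 * nsq w)" unfolding cc by simp
      finally have "cinner (z - scaleC t w) (z - scaleC t w) = cinner z z - complex_of_real (2 * s * (cmod c)^2)
         + complex_of_real (s^2 * (cmod c)^2 * nsq w)" .
      thus ?thesis unfolding nsq_def by simp
    qed
    finally have "0 \<le> s * (cmod c)^2 * (s * nsq w - 2)" by (simp add: algebra_simps power2_eq_square)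
    moreover have "s * nsq w - 2 < 0" using sw by simp
    ultimately have "s * (cmod c)^2 \<le> 0" using mult_pos_neg[of "s*(cmod c)^2" "s * nsq w - 2"] by linarith
    hence "(cmod c)^2 \<le> 0" using sp by (simp add: mult_le_0_iff)
    hence "cmod c = 0" by simp
    thus ?thesis using c_def by simp
  qed
  have z0: "z \<noteq> 0" using fz f0 by auto
  define r where "r = nsq z"
  have zz: "cinner z z = complex_of_real r" unfolding r_def nsq_def by (rule cinner_self_real[symmetric])
  have rp: "r \<noteq> 0" using z0 zz cinner_eq_zero_iff by fastforce
  show ?thesis
  proof (intro exI allI)
    fix x
    have "f (x - scaleC (f x) z) = 0" using fdiff hom fz by simp
    hence "cinner (x - scaleC (f x) z) z = 0" by (rule orth)
    hence "cinner x z = cnj (f x) * r" by (simp add: cinner_diff_left cinner_scaleC_left zz)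
    hence "cinner z x = f x * r" by (metis cinner_commute complex_cnj_cnj complex_cnj_complex_of_real complex_cnj_mult)
    thus "f x = cinner (scaleC (1 / complex_of_real r) z) x"
      using rp by (simp add: cinner_scaleC_left)
  qed
qed


lemma adj_unique:
  assumes "\<forall>x y. cinner (A x) y = cinner x (B y)"
  shows "adj A = B"
  unfolding adj_def
proof (rule the_equality)
  show "\<forall>x y. cinner (A x) y = cinner x (B y)" by (rule assms)
next
  fix B' assume h: "\<forall>x y. cinner (A x) y = cinner x (B' y)"
  show "B' = B"
  proof
    fix y show "B' y = B y" by (rule cinner_ext) (use h assms in metis)
  qed
qed

lemma adj_exists:
  fixes A :: "'a::chilbert \<Rightarrow> 'a"
  assumes "bounded_op A"
  shows "\<exists>B. \<forall>x y. cinner (A x) y = cinner x (B y)"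
proof -
  from assms obtain K where add: "\<forall>x y. A (x + y) = A x + A y"
    and hom: "\<forall>c x. A (scaleC c x) = scaleC c (A x)" and K: "\<forall>x. cnorm (A x) \<le> K * cnorm x"
    unfolding bounded_op_def by blast
  have "\<forall>y. \<exists>z. \<forall>x. cinner y (A x) = cinner z x"
  proof
    fix y
    show "\<exists>z. \<forall>x. cinner y (A x) = cinner z x"
    proof (rule riesz[where K = "cnorm y * K"])
      show "\<forall>x1 x2. cinner y (A (x1 + x2)) = cinner y (A x1) + cinner y (A x2)"
        using add by (simp add: cinner_add_right)
      show "\<forall>c x. cinner y (A (scaleC c x)) = c * cinner y (A x)"
        using hom by (simp add: cinner_scaleC_right)
      show "\<forall>x. cmod (cinner y (A x)) \<le> cnorm y * K * cnorm x"
      proof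
        fix x
        have "cmod (cinner y (A x)) \<le> cnorm y * cnorm (A x)" by (rule cs)
        also have "\<dots> \<le> cnorm y * (K * cnorm x)" by (rule mult_left_mono) (use K cnorm_nonneg in auto)
        finally show "cmod (cinner y (A x)) \<le> cnorm y * K * cnorm x" by (simp add: mult.assoc)
      qed
    qed
  qed
  then obtain B where B: "\<And>y x. cinner y (A x) = cinner (B y) x" by metis
  show ?thesis
  proof (intro exI allI)
    fix x y
    have "cinner (A x) y = cnj (cinner y (A x))" by (rule cinner_commute)
    also have "\<dots> = cnj (cinner (B y) x)" by (simp add: B)
    also have "\<dots> = cinner x (B y)" by (simp add: cinner_commute[of x "B y"])
    finally show "cinner (A x) y = cinner x (B y)" .
  qed
qed

lemma adj_prop:
  fixes A :: "'a::chilbert \<Rightarrow> 'a"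
  assumes "bounded_op A"
  shows "cinner (A x) y = cinner x (adj A y)"
proof -
  obtain B where B: "\<forall>x y. cinner (A x) y = cinner x (B y)" using adj_exists[OF assms] by blast
  have "adj A = B" by (rule adj_unique[OF B])
  thus ?thesis using B by simp
qed

lemma adj_bounded:
  fixes A :: "'a::chilbert \<Rightarrow> 'a"
  assumes bA: "bounded_op A"
  shows "bounded_op (adj A)"
proof -
  from bA obtain K where add: "\<forall>x y. A (x + y) = A x + A y"
    and hom: "\<forall>c x. A (scaleC c x) = scaleC c (A x)" and K: "\<forall>x. cnorm (A x) \<le> K * cnorm x"
    unfolding bounded_op_def by blast
  have p: "\<And>x y. cinner (A x) y = cinner x (adj A y)" by (rule adj_prop[OF bA])
  have a1: "\<forall>x y. adj A (x + y) = adj A x + adj A y"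
  proof (intro allI)
    fix y z show "adj A (y + z) = adj A y + adj A z"
      by (rule cinner_ext) (simp add: p[symmetric] cinner_add_right)
  qed
  have a2: "\<forall>c y. adj A (scaleC c y) = scaleC c (adj A y)"
  proof (intro allI)
    fix c y show "adj A (scaleC c y) = scaleC c (adj A y)"
      by (rule cinner_ext) (simp add: p[symmetric] cinner_scaleC_right)
  qed
  have a3: "\<forall>y. cnorm (adj A y) \<le> max K 0 * cnorm y"
  proof
    fix y
    define v where "v = adj A y"
    have "cnorm v ^ 2 = Re (cinner v v)" by (rule cnorm_sq)
    also have "cinner v v = cinner (A v) y" unfolding v_def by (simp add: p)
    also have "Re (cinner (A v) y) \<le> cmod (cinner (A v) y)" by (rule complex_Re_le_cmod)
    also have "\<dots> \<le> cnorm (A v) * cnorm y" by (rule cs)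
    also have "\<dots> \<le> (max K 0 * cnorm v) * cnorm y"
    proof (rule mult_right_mono)
      show "cnorm (A v) \<le> max K 0 * cnorm v" using K[rule_format, of v] cnorm_nonneg[of v]
        by (meson max.cobounded1 mult_right_mono order_trans)
    qed (rule cnorm_nonneg)
    finally have h: "cnorm v * cnorm v \<le> cnorm v * (max K 0 * cnorm y)" by (simp add: power2_eq_square algebra_simps)
    show "cnorm (adj A y) \<le> max K 0 * cnorm y"
    proof (cases "cnorm v = 0")
      case True thus ?thesis using cnorm_nonneg[of y] v_def by simp
    next
      case False
      hence "cnorm v > 0" using cnorm_nonneg[of v] by simp
      thus ?thesis using h v_def by (simp add: mult_le_cancel_left_pos)
    qed
  qed
  show ?thesis unfolding bounded_op_def using a1 a2 a3 by blast
qed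

lemma adj_adj:
  fixes A :: "'a::chilbert \<Rightarrow> 'a"
  assumes bA: "bounded_op A"
  shows "adj (adj A) = A"
proof (rule adj_unique, intro allI)
  fix x y
  have "cinner (adj A x) y = cnj (cinner y (adj A x))" by (rule cinner_commute)
  also have "\<dots> = cnj (cinner (A y) x)" by (simp add: adj_prop[OF bA])
  also have "\<dots> = cinner x (A y)" by (simp add: cinner_commute[of x "A y"])
  finally show "cinner (adj A x) y = cinner x (A y)" .
qed

lemma adj_comp:
  fixes B C :: "'a::chilbert \<Rightarrow> 'a"
  assumes bB: "bounded_op B" and bC: "bounded_op C"
  shows "adj (B \<circ> C) = adj C \<circ> adj B"
  by (rule adj_unique) (simp add: adj_prop[OF bB] adj_prop[OF bC])

lemma bounded_comp:
  assumes bB: "bounded_op B" and bC: "bounded_op C"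
  shows "bounded_op (B \<circ> C)"
proof -
  from bB obtain KB where KB: "\<forall>x. cnorm (B x) \<le> KB * cnorm x" unfolding bounded_op_def by blast
  from bC obtain KC where KC: "\<forall>x. cnorm (C x) \<le> KC * cnorm x" unfolding bounded_op_def by blast
  have "\<forall>x. cnorm (B (C x)) \<le> (max KB 0 * KC) * cnorm x"
  proof
    fix x
    have "cnorm (B (C x)) \<le> max KB 0 * cnorm (C x)" using KB[rule_format, of "C x"] cnorm_nonneg[of "C x"]
      by (meson max.cobounded1 mult_right_mono order_trans)
    also have "\<dots> \<le> max KB 0 * (KC * cnorm x)" by (rule mult_left_mono) (use KC in auto)
    finally show "cnorm (B (C x)) \<le> (max KB 0 * KC) * cnorm x" by (simp add: mult.assoc)
  qed
  thus ?thesis using bB bC unfolding bounded_op_def by auto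
qed

lemma additive_sum:
  fixes f :: "'a::complex_inner \<Rightarrow> 'a"
  assumes "\<forall>x y. f (x + y) = f x + f y" and "finite S"
  shows "f (sum g S) = (\<Sum>i\<in>S. f (g i))"
  using assms(2)
proof (induction S rule: finite_induct)
  case empty
  have "f 0 = 0" using assms(1)[rule_format, of 0 0] by simp
  thus ?case by simp
next
  case (insert a S) thus ?case using assms(1) by simp
qed

lemma sum_single:
  assumes "finite S" "i \<in> S" "\<forall>j\<in>S. j \<noteq> i \<longrightarrow> g j = 0"
  shows "sum g S = g i"
proof -
  have "sum g S = g i + sum g (S - {i})" using assms by (simp add: sum.remove)
  also have "sum g (S - {i}) = 0" using assms by (intro sum.neutral) auto
  finally show ?thesis by simp
qed

theorem proposition3p8:
  fixes n :: nat
    and \<theta> :: "nat \<Rightarrow> nat \<Rightarrow> real"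
    and U :: "nat \<Rightarrow> nat \<Rightarrow> 'a::chilbert \<Rightarrow> 'a"
  assumes n2: "n \<ge> 2"
    and skew: "\<forall>i\<in>{1..n}. \<forall>j\<in>{1..n}. \<theta> i j = - \<theta> j i"
    and bdd: "\<forall>i\<in>{1..n}. \<forall>k\<in>{1..n}. bounded_op (U i k)"
    and R1: "\<forall>i\<in>{1..n}. \<forall>j\<in>{1..n}. \<forall>k\<in>{1..n}. \<forall>l\<in>{1..n}. \<forall>x.
      U i k (U j l x) + scaleC (omega \<theta> j i) (U j k (U i l x))
      = scaleC (omega \<theta> k l) (U i l (U j k x))
        + scaleC (omega \<theta> j i * omega \<theta> k l) (U j l (U i k x))"
    and R2: "\<forall>k\<in>{1..n}. \<forall>l\<in>{1..n}. \<forall>x.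
      (\<Sum>i\<in>{1..n}. U i k (adj (U i l) x)) = (if k = l then x else 0)"
    and R3: "\<forall>k\<in>{1..n}. \<forall>l\<in>{1..n}. \<forall>x.
      (\<Sum>i\<in>{1..n}. adj (U i l) (U i k x)) = (if k = l then x else 0)"
    and R4: "\<forall>i\<in>{1..n}. \<forall>j\<in>{1..n}. \<forall>k\<in>{1..n}. i \<noteq> j \<longrightarrow>
      U j k \<circ> adj (U i k) = (\<lambda>_. 0)"
    and R5: "\<forall>i\<in>{1..n}. \<forall>j\<in>{1..n}. \<forall>k\<in>{1..n}. i \<noteq> j \<longrightarrow>
      adj (U i k) \<circ> U j k = (\<lambda>_. 0)"
  shows "\<forall>i\<in>{1..n}. \<forall>k\<in>{1..n}.
    partial_isometry (U i k) \<and> partial_isometry (adj (U i k))"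
proof (intro ballI conjI)
  fix i k assume i: "i \<in> {1..n}" and k: "k \<in> {1..n}"
  have bU: "bounded_op (U i k)" using bdd i k by blast
  have bA: "bounded_op (adj (U i k))" by (rule adj_bounded[OF bU])
  have bP: "bounded_op (adj (U i k) \<circ> U i k)" by (rule bounded_comp[OF bA bU])
  have bQ: "bounded_op (U i k \<circ> adj (U i k))" by (rule bounded_comp[OF bU bA])
  have zA: "adj (U i k) 0 = 0" using bA unfolding bounded_op_def
    by (metis add_cancel_right_right add.right_neutral)
  have zU: "U i k 0 = 0" using bU unfolding bounded_op_def
    by (metis add_cancel_right_right add.right_neutral)
  have PP: "(adj (U i k) \<circ> U i k) \<circ> (adj (U i k) \<circ> U i k) = adj (U i k) \<circ> U i k"
  proof (rule ext)
    fix x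
    let ?P = "adj (U i k) \<circ> U i k"
    have addP: "\<forall>x y. ?P (x + y) = ?P x + ?P y" using bP unfolding bounded_op_def by blast
    have S: "(\<Sum>j\<in>{1..n}. adj (U j k) (U j k x)) = x" using R3 k by simp
    have "?P x = ?P (\<Sum>j\<in>{1..n}. adj (U j k) (U j k x))" by (simp only: S)
    also have "\<dots> = (\<Sum>j\<in>{1..n}. ?P (adj (U j k) (U j k x)))" by (rule additive_sum[OF addP]) simp
    also have "\<dots> = ?P (adj (U i k) (U i k x))"
    proof (rule sum_single)
      show "\<forall>j\<in>{1..n}. j \<noteq> i \<longrightarrow> ?P (adj (U j k) (U j k x)) = 0"
      proof (intro ballI impI)
        fix j assume j: "j \<in> {1..n}" and ji: "j \<noteq> i"
        have "U i k \<circ> adj (U j k) = (\<lambda>_. 0)" using R4 i j k ji by blast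
        hence "U i k (adj (U j k) (U j k x)) = 0" by (metis comp_apply)
        thus "?P (adj (U j k) (U j k x)) = 0" using zA by simp
      qed
    qed (use i in auto)
    finally show "(?P \<circ> ?P) x = ?P x" by simp
  qed
  have QQ: "(U i k \<circ> adj (U i k)) \<circ> (U i k \<circ> adj (U i k)) = U i k \<circ> adj (U i k)"
  proof (rule ext)
    fix x
    let ?Q = "U i k \<circ> adj (U i k)"
    have addQ: "\<forall>x y. ?Q (x + y) = ?Q x + ?Q y" using bQ unfolding bounded_op_def by blast
    have S: "(\<Sum>j\<in>{1..n}. U j k (adj (U j k) x)) = x" using R2 k by simp
    have "?Q x = ?Q (\<Sum>j\<in>{1..n}. U j k (adj (U j k) x))" by (simp only: S)
    also have "\<dots> = (\<Sum>j\<in>{1..n}. ?Q (U j k (adj (U j k) x)))" by (rule additive_sum[OF addQ]) simp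
    also have "\<dots> = ?Q (U i k (adj (U i k) x))"
    proof (rule sum_single)
      show "\<forall>j\<in>{1..n}. j \<noteq> i \<longrightarrow> ?Q (U j k (adj (U j k) x)) = 0"
      proof (intro ballI impI)
        fix j assume j: "j \<in> {1..n}" and ji: "j \<noteq> i"
        have "adj (U i k) \<circ> U j k = (\<lambda>_. 0)" using R5 i j k ji by metis
        hence "adj (U i k) (U j k (adj (U j k) x)) = 0" by (metis comp_apply)
        thus "?Q (U j k (adj (U j k) x)) = 0" using zU by simp
      qed
    qed (use i in auto)
    finally show "(?Q \<circ> ?Q) x = ?Q x" by simp
  qed
  have adjP: "adj (adj (U i k) \<circ> U i k) = adj (U i k) \<circ> U i k"
    using adj_comp[OF bA bU] adj_adj[OF bU] by simp
  have adjQ: "adj (U i k \<circ> adj (U i k)) = U i k \<circ> adj (U i k)"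
    using adj_comp[OF bU bA] adj_adj[OF bU] by simp
  show "partial_isometry (U i k)"
    unfolding partial_isometry_def is_projection_def using bU bP PP adjP by blast
  show "partial_isometry (adj (U i k))"
    unfolding partial_isometry_def is_projection_def adj_adj[OF bU] using bA bQ QQ adjQ by blast
qed

end
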